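(* Let $\mathcal{M}\subset\mathbb{R}^d$ be a set of $n$ distinct points with the Euclidean metric, $k$ an integer with $2\le k<n$, and $0<\epsilon<\tfrac12$. Let $\epsilon_1=\frac{\epsilon}{3+2\epsilon}$. Let $P_1$ be the output of the farthest-point-insertion procedure on $(\mathcal{M},k)$ (choose $q_1,q_2\in\mathcal{M}$ realizing $\operatorname{diam}(\mathcal{M})$, set $S_2=\{q_1,q_2\}$, and for $i=2,\dots,k-1$ add a point of $\mathcal{M}$ maximizing $\delta(\cdot,S_i)$), and let $\epsilon_2=\frac{\epsilon_1R_{P_1}}{2\sqrt d}$. Partition $\mathbb{R}^d$ by an axis-parallel grid of cubic cells of side length $\epsilon_2$, and let $\mathcal{C}\subset\mathcal{M}$ contain exactly one (arbitrarily chosen) point of $\mathcal{M}$ from each cell that intersects $\mathcal{M}$. Let $P\subset\mathcal{C}$ be a $k$-point subset of $\mathcal{C}$ minimizing $GR_P$ (gap ratio with respect to $\mathcal{M}$) among all $k$-subsets of $\mathcal{C}$. Then $GR_P\le(1+\epsilon)\,GR_{OPT}$, where $GR_{OPT}=\min\{GR_{P'}:P'\subset\mathcal{M},\ |P'|=k\}$.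
   Context: For a finite set $S\subset\mathcal{M}$ with $|S|\ge2$: $\delta(x,S)=\min_{s\in S}\|x-s\|$, $R_S=\max_{x\in\mathcal{M}}\delta(x,S)$, $r_S=\min_{p,q\in S,\,p\ne q}\|p-q\|/2$, and the gap ratio is $GR_S=R_S/r_S$ (all with respect to the whole set $\mathcal{M}$). *)

theory Defs
  imports "HOL-Analysis.Analysis"
begin

definition delta :: "real^'d \<Rightarrow> (real^'d) set \<Rightarrow> real" where
  "delta x S = Min ((\<lambda>s. norm (x - s)) ` S)"

definition covR :: "(real^'d) set \<Rightarrow> (real^'d) set \<Rightarrow> real" where
  "covR M S = Max ((\<lambda>x. delta x S) ` M)"

definition packr :: "(real^'d) set \<Rightarrow> real" where
  "packr S = Min {norm (p - q) / 2 | p q. p \<in> S \<and> q \<in> S \<and> p \<noteq> q}"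

definition GR :: "(real^'d) set \<Rightarrow> (real^'d) set \<Rightarrow> real" where
  "GR M S = covR M S / packr S"

definition GR_OPT :: "(real^'d) set \<Rightarrow> nat \<Rightarrow> real" where
  "GR_OPT M k = Min {GR M P' | P'. P' \<subseteq> M \<and> card P' = k}"

text \<open>qs is a possible run (with arbitrary tie breaking) of farthest-point insertion
  on (M,k): qs!0, qs!1 realize the diameter of M, and for i = 2..k-1 the point qs!i
  is a point of M maximizing delta(., {qs!0,...,qs!(i-1)}).\<close>
definition fpi_run :: "(real^'d) set \<Rightarrow> nat \<Rightarrow> (real^'d) list \<Rightarrow> bool" where
  "fpi_run M k qs \<longleftrightarrow>
     length qs = k \<and> set qs \<subseteq> M \<and>
     (\<forall>x\<in>M. \<forall>y\<in>M. norm (x - y) \<le> norm (qs!0 - qs!1)) \<and>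
     (\<forall>i. 2 \<le> i \<and> i < k \<longrightarrow>
        (\<forall>x\<in>M. delta x (set (take i qs)) \<le> delta (qs!i) (set (take i qs))))"

definition grid_cell :: "real^'d \<Rightarrow> real \<Rightarrow> real^'d \<Rightarrow> int^'d" where
  "grid_cell o' e x = (\<chi> i. \<lfloor>(x$i - o'$i) / e\<rfloor>)"

end

theory Submission
  imports Defs
begin

lemma delta_le: "finite S \<Longrightarrow> s \<in> S \<Longrightarrow> delta x S \<le> norm (x - s)"
  unfolding delta_def by (rule Min_le) auto

lemma delta_attain: "finite S \<Longrightarrow> S \<noteq> {} \<Longrightarrow> \<exists>s\<in>S. delta x S = norm (x - s)"
proof -
  assume "finite S" "S \<noteq> {}"
  then have "delta x S \<in> (\<lambda>s. norm (x - s)) ` S" unfolding delta_def by (intro Min_in) auto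
  then show ?thesis by auto
qed

lemma delta_ge: "finite S \<Longrightarrow> S \<noteq> {} \<Longrightarrow> (\<And>s. s \<in> S \<Longrightarrow> a \<le> norm (x - s)) \<Longrightarrow> a \<le> delta x S"
  unfolding delta_def by (subst Min_ge_iff) auto

lemma delta_mono: "finite T \<Longrightarrow> S \<subseteq> T \<Longrightarrow> S \<noteq> {} \<Longrightarrow> delta x T \<le> delta x S"
  by (metis delta_attain delta_le finite_subset in_mono)

lemma covR_ge: "finite M \<Longrightarrow> x \<in> M \<Longrightarrow> delta x S \<le> covR M S"
  unfolding covR_def by (rule Max_ge) auto

lemma covR_attain: "finite M \<Longrightarrow> M \<noteq> {} \<Longrightarrow> \<exists>x\<in>M. covR M S = delta x S"
proof -
  assume "finite M" "M \<noteq> {}"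
  then have "covR M S \<in> (\<lambda>x. delta x S) ` M" unfolding covR_def by (intro Max_in) auto
  then show ?thesis by auto
qed

lemma covR_le: "finite M \<Longrightarrow> M \<noteq> {} \<Longrightarrow> (\<And>x. x \<in> M \<Longrightarrow> delta x S \<le> a) \<Longrightarrow> covR M S \<le> a"
  unfolding covR_def by (subst Max_le_iff) auto

lemma packr_set_finite: "finite S \<Longrightarrow> finite {norm (p - q) / 2 | p q. p \<in> S \<and> q \<in> S \<and> p \<noteq> q}"
proof -
  assume "finite S"
  have "{norm (p - q) / 2 | p q. p \<in> S \<and> q \<in> S \<and> p \<noteq> q} \<subseteq> (\<lambda>(p,q). norm (p - q) / 2) ` (S \<times> S)"
    by (auto simp: image_iff) blast
  then show ?thesis using \<open>finite S\<close> by (meson finite_SigmaI finite_imageI finite_subset)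
qed

lemma packr_le: "finite S \<Longrightarrow> p \<in> S \<Longrightarrow> q \<in> S \<Longrightarrow> p \<noteq> q \<Longrightarrow> packr S \<le> norm (p - q) / 2"
  unfolding packr_def by (rule Min_le[OF packr_set_finite]) auto

lemma packr_attain: "finite S \<Longrightarrow> p \<in> S \<Longrightarrow> q \<in> S \<Longrightarrow> p \<noteq> q \<Longrightarrow>
   \<exists>a b. a \<in> S \<and> b \<in> S \<and> a \<noteq> b \<and> packr S = norm (a - b) / 2"
proof -
  assume a: "finite S" "p \<in> S" "q \<in> S" "p \<noteq> q"
  have "packr S \<in> {norm (p - q) / 2 | p q. p \<in> S \<and> q \<in> S \<and> p \<noteq> q}"
    unfolding packr_def by (rule Min_in[OF packr_set_finite[OF a(1)]]) (use a in blast)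
  then show ?thesis by auto
qed

lemma packr_ge: "finite S \<Longrightarrow> p \<in> S \<Longrightarrow> q \<in> S \<Longrightarrow> p \<noteq> q \<Longrightarrow>
   (\<And>a b. a \<in> S \<Longrightarrow> b \<in> S \<Longrightarrow> a \<noteq> b \<Longrightarrow> c \<le> norm (a - b) / 2) \<Longrightarrow> c \<le> packr S"
  by (metis packr_attain)

lemma card2_ex: "card S \<ge> 2 \<Longrightarrow> \<exists>p q. p \<in> S \<and> q \<in> S \<and> p \<noteq> q"
proof -
  assume "card S \<ge> 2"
  then obtain T where "T \<subseteq> S" "card T = 2" by (meson obtain_subset_with_card_n)
  then show ?thesis by (auto simp: card_2_iff)
qed

lemma cell_close:
  fixes c x o' :: "real^'d"
  assumes "e > 0" "grid_cell o' e c = grid_cell o' e x"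
  shows "norm (c - x) \<le> sqrt (real CARD('d)) * e"
proof -
  have comp: "\<bar>(c - x)$i\<bar> \<le> e" for i
  proof -
    have "\<lfloor>(c$i - o'$i) / e\<rfloor> = \<lfloor>(x$i - o'$i) / e\<rfloor>"
      using arg_cong[OF assms(2), of "\<lambda>v. v $ i"] unfolding grid_cell_def by simp
    then have "\<bar>(c$i - o'$i) / e - (x$i - o'$i) / e\<bar> < 1"
      by linarith
    then have "\<bar>(c$i - x$i) / e\<bar> < 1" by (simp add: diff_divide_distrib)
    then show ?thesis using assms(1) by (simp add: abs_divide divide_less_eq)
  qed
  have "norm (c - x) = sqrt (\<Sum>i\<in>UNIV. ((c - x)$i)^2)"
    by (simp add: norm_vec_def L2_set_def)
  also have "\<dots> \<le> sqrt (\<Sum>i\<in>(UNIV::'d set). e^2)"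
    apply (rule real_sqrt_le_mono, rule sum_mono)
    using comp by (metis abs_le_square_iff abs_of_pos assms(1))
  also have "\<dots> = sqrt (real CARD('d)) * e"
    using assms(1) by (simp add: real_sqrt_mult)
  finally show ?thesis .
qed


lemma pigeon_cov:
  fixes M T Q :: "(real^'d) set"
  assumes "finite M" "T \<subseteq> M" "finite T" "finite Q" "Q \<noteq> {}" "card Q < card T"
    and sep: "\<And>u v. u \<in> T \<Longrightarrow> v \<in> T \<Longrightarrow> u \<noteq> v \<Longrightarrow> a \<le> norm (u - v)"
  shows "a \<le> 2 * covR M Q"
proof -
  define f where "f u = (SOME q. q \<in> Q \<and> delta u Q = norm (u - q))" for u
  have f: "f u \<in> Q \<and> delta u Q = norm (u - f u)" for u
    unfolding f_def by (rule someI_ex) (use delta_attain[OF assms(4,5)] in blast)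
  have "\<not> inj_on f T"
  proof
    assume "inj_on f T"
    then have "card T \<le> card Q" using f by (intro card_inj_on_le[OF _ _ assms(4)]) auto
    then show False using assms(6) by simp
  qed
  then obtain u v where uv: "u \<in> T" "v \<in> T" "u \<noteq> v" "f u = f v" unfolding inj_on_def by blast
  have "a \<le> norm (u - v)" using sep uv by auto
  also have "\<dots> \<le> norm (u - f u) + norm (f v - v)" proof -
    have "u - v = (u - f u) + (f v - v)" using uv(4) by simp
    then show ?thesis using norm_triangle_ineq[of "u - f u" "f v - v"] by simp
  qed
  also have "\<dots> = delta u Q + delta v Q" using f by (simp add: norm_minus_commute)
  also have "\<dots> \<le> covR M Q + covR M Q"
    using covR_ge[OF assms(1)] uv assms(2) by (intro add_mono) auto
  finally show ?thesis by simp
qed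

lemma fpi_facts:
  fixes M :: "(real^'d) set"
  assumes fin: "finite M" and cM: "card M = n" and k2: "2 \<le> k" and kn: "k < n"
    and run: "fpi_run M k qs"
  shows "covR M (set qs) > 0"
    and "\<And>i j. i < k \<Longrightarrow> j < k \<Longrightarrow> i \<noteq> j \<Longrightarrow> covR M (set qs) \<le> norm (qs!i - qs!j)"
    and "card (set qs) = k"
    and "\<And>Q. Q \<subseteq> M \<Longrightarrow> card Q = k \<Longrightarrow> covR M (set qs) \<le> 2 * covR M Q"
proof -
  define R1 where "R1 = covR M (set qs)"
  have len: "length qs = k" and sub: "set qs \<subseteq> M"
    and diam: "\<forall>x\<in>M. \<forall>y\<in>M. norm (x - y) \<le> norm (qs!0 - qs!1)"
    and grd: "\<And>i x. 2 \<le> i \<Longrightarrow> i < k \<Longrightarrow> x \<in> M \<Longrightarrow> delta x (set (take i qs)) \<le> delta (qs!i) (set (take i qs))"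
    using run unfolding fpi_run_def by auto
  have qsne: "set qs \<noteq> {}" using len k2 by auto
  have Mne: "M \<noteq> {}" using cM kn by auto
  have "card (set qs) < card M" using card_length[of qs] len kn cM by linarith
  then obtain x0 where x0: "x0 \<in> M" "x0 \<notin> set qs" using sub by (metis psubsetI psubset_card_mono ex_in_conv less_imp_le_nat
      not_less subset_antisym fin card_mono Diff_eq_empty_iff Diff_iff)
  obtain s0 where s0: "s0 \<in> set qs" "delta x0 (set qs) = norm (x0 - s0)" using delta_attain[of "set qs" x0] qsne by auto
  have "0 < delta x0 (set qs)" using s0 x0 by auto
  also have "\<dots> \<le> R1" unfolding R1_def by (rule covR_ge[OF fin x0(1)])
  finally have R1pos: "0 < R1" .
  then show "covR M (set qs) > 0" by (simp add: R1_def)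
  obtain xs where xs: "xs \<in> M" "R1 = delta xs (set qs)" using covR_attain[OF fin Mne] R1_def by auto
  have xsfar: "R1 \<le> norm (xs - qs!i)" if "i < k" for i
    using xs delta_le[of "set qs" "qs!i" xs] that len by auto
  have lt: "R1 \<le> norm (qs!i - qs!j)" if "i < j" "j < k" for i j
  proof (cases "j = 1")
    case True
    then have "i = 0" using that by auto
    obtain s where s: "s \<in> set qs" "delta xs (set qs) = norm (xs - s)" using delta_attain[of "set qs" xs] qsne by auto
    have "R1 \<le> norm (qs!0 - qs!1)" using diam xs s sub by auto
    then show ?thesis using True \<open>i = 0\<close> by (simp add: norm_minus_commute)
  next
    case False
    then have j2: "2 \<le> j" using that by auto
    have tk: "qs!i \<in> set (take j qs)" using that len by (metis in_set_conv_nth length_take min.absorb2 less_imp_le_nat nth_take less_trans order.strict_trans)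
    have tne: "set (take j qs) \<noteq> {}" using tk equals0D by metis
    have "R1 = delta xs (set qs)" by (rule xs(2))
    also have "\<dots> \<le> delta xs (set (take j qs))" by (rule delta_mono[OF _ set_take_subset tne]) simp
    also have "\<dots> \<le> delta (qs!j) (set (take j qs))" using grd[OF j2 that(2) xs(1)] .
    also have "\<dots> \<le> norm (qs!j - qs!i)" by (rule delta_le[OF _ tk]) simp
    finally show ?thesis by (simp add: norm_minus_commute)
  qed
  show sep: "R1 \<le> norm (qs!i - qs!j)" if "i < k" "j < k" "i \<noteq> j" for i j
    using that lt[of i j] lt[of j i] by (cases "i < j") (auto simp: norm_minus_commute)
  have dist: "distinct qs"
    unfolding distinct_conv_nth using sep R1pos len by fastforce
  then show ck: "card (set qs) = k" using len distinct_card by blast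
  have xsn: "xs \<notin> set qs" using xsfar R1pos len by (metis in_set_conv_nth not_le norm_zero right_minus_eq)
  show "R1 \<le> 2 * covR M Q" if "Q \<subseteq> M" "card Q = k" for Q
  proof (rule pigeon_cov[OF fin _ _ _ _ _ ])
    show "insert xs (set qs) \<subseteq> M" using xs sub by auto
    show "finite (insert xs (set qs))" by simp
    show "finite Q" using that fin finite_subset by blast
    show "Q \<noteq> {}" using that k2 by auto
    show "card Q < card (insert xs (set qs))" using xsn ck that by simp
    fix u v assume "u \<in> insert xs (set qs)" "v \<in> insert xs (set qs)" "u \<noteq> v"
    then show "R1 \<le> norm (u - v)"
      using sep xsfar len by (auto simp: in_set_conv_nth norm_minus_commute)
  qed
qed


theorem theorem9:
  fixes M :: "(real^'d) set" and n k :: nat and \<epsilon> :: real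
    and qs :: "(real^'d) list" and o' :: "real^'d"
    and C P :: "(real^'d) set"
  assumes "finite M" and "card M = n"
    and "2 \<le> k" and "k < n"
    and "0 < \<epsilon>" and "\<epsilon> < 1/2"
    and "fpi_run M k qs"
    and "C \<subseteq> M"
    and "\<forall>x\<in>M. \<exists>!c. c \<in> C \<and>
           grid_cell o' ((\<epsilon> / (3 + 2*\<epsilon>)) * covR M (set qs) / (2 * sqrt (real CARD('d)))) c
         = grid_cell o' ((\<epsilon> / (3 + 2*\<epsilon>)) * covR M (set qs) / (2 * sqrt (real CARD('d)))) x"
    and "P \<subseteq> C" and "card P = k"
    and "\<forall>P'. P' \<subseteq> C \<and> card P' = k \<longrightarrow> GR M P \<le> GR M P'"
  shows "GR M P \<le> (1 + \<epsilon>) * GR_OPT M k"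
proof -
  note fin = assms(1)
  define e where "e = \<epsilon> / (3 + 2*\<epsilon>)"
  define R1 where "R1 = covR M (set qs)"
  define e2 where "e2 = e * R1 / (2 * sqrt (real CARD('d)))"
  define dl where "dl = e * R1 / 2"
  have R1pos: "R1 > 0" unfolding R1_def by (rule fpi_facts(1)[OF assms(1-4,7)])
  have epos: "e > 0" unfolding e_def using assms(5) by simp
  have ee: "(1 + e) / (1 - 2*e) = 1 + \<epsilon>" "2 * e < 1"
    unfolding e_def using assms(5,6) by (auto simp: field_simps)
  have sq: "sqrt (real CARD('d)) > 0" by simp
  have e2pos: "e2 > 0" unfolding e2_def using epos R1pos sq by simp
  have dle: "sqrt (real CARD('d)) * e2 = dl" unfolding e2_def dl_def using sq by (simp add: field_simps)
  have cells: "\<forall>x\<in>M. \<exists>!c. c \<in> C \<and> grid_cell o' e2 c = grid_cell o' e2 x"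
    using assms(9) unfolding e2_def e_def R1_def .
  define s where "s x = (THE c. c \<in> C \<and> grid_cell o' e2 c = grid_cell o' e2 x)" for x
  have s: "s x \<in> C \<and> grid_cell o' e2 (s x) = grid_cell o' e2 x" if "x \<in> M" for x
    unfolding s_def using theI'[OF bspec[OF cells that]] .
  have sclose: "norm (s x - x) \<le> dl" if "x \<in> M" for x
    using cell_close[OF e2pos, of o' "s x" x] s[OF that] dle by simp
  define F where "F = {GR M P' | P'. P' \<subseteq> M \<and> card P' = k}"
  have setqs: "set qs \<subseteq> M" "card (set qs) = k"
    using assms(7) fpi_facts(3)[OF assms(1-4,7)] unfolding fpi_run_def by auto
  have Ffin: "finite F" unfolding F_def using fin
    by (rule_tac finite_subset[of _ "(GR M) ` Pow M"]) auto
  have Fne: "GR M (set qs) \<in> F" unfolding F_def using setqs by blast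
  have "GR_OPT M k \<in> F" unfolding GR_OPT_def F_def[symmetric] using Ffin Fne by (intro Min_in) auto
  then obtain Opt where Opt: "Opt \<subseteq> M" "card Opt = k" "GR M Opt = GR_OPT M k" unfolding F_def by auto
  have Ole: "GR_OPT M k \<le> GR M (set qs)" unfolding GR_OPT_def F_def[symmetric] using Ffin Fne by simp
  have Ofin: "finite Opt" using Opt(1) fin finite_subset by blast
  define R where "R = covR M Opt"
  define r where "r = packr Opt"
  obtain p0 q0 where pq0: "p0 \<in> Opt" "q0 \<in> Opt" "p0 \<noteq> q0" using card2_ex[of Opt] Opt(2) assms(3) by auto
  have rpos: "r > 0"
  proof -
    obtain a b where "a \<in> Opt" "b \<in> Opt" "a \<noteq> b" "packr Opt = norm (a - b) / 2"
      using packr_attain[OF Ofin pq0] by blast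
    then show ?thesis unfolding r_def by (metis divide_pos_pos right_minus_eq zero_less_norm_iff zero_less_numeral)
  qed
  have RR1: "R1 \<le> 2 * R" unfolding R1_def R_def by (rule fpi_facts(4)[OF assms(1-4,7) Opt(1,2)])
  obtain p1 q1 where pq1: "p1 \<in> set qs" "q1 \<in> set qs" "p1 \<noteq> q1" using card2_ex[of "set qs"] setqs assms(3) by auto
  have pk1: "R1 / 2 \<le> packr (set qs)"
  proof (rule packr_ge[OF _ pq1])
    fix a b assume ab: "a \<in> set qs" "b \<in> set qs" "a \<noteq> b"
    then obtain i j where "i < length qs" "j < length qs" "a = qs!i" "b = qs!j" by (metis in_set_conv_nth)
    moreover have "length qs = k" using assms(7) unfolding fpi_run_def by auto
    ultimately show "R1 / 2 \<le> norm (a - b) / 2"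
      using fpi_facts(2)[OF assms(1-4,7), of i j] ab unfolding R1_def by auto
  qed simp
  have GR2: "GR M (set qs) \<le> 2"
    unfolding GR_def R1_def[symmetric] using pk1 R1pos by (simp add: divide_le_eq)
  have "R / r \<le> 2" using Opt(3) Ole GR2 unfolding GR_def R_def r_def by simp
  then have Rr: "R \<le> 2 * r" using rpos by (simp add: divide_le_eq)
  have d1: "dl \<le> e * R" unfolding dl_def using RR1 epos by (simp add: mult_left_mono[of _ _ e, simplified] algebra_simps)
  have "e * R \<le> e * (2 * r)" using Rr epos by (intro mult_left_mono) auto
  then have d2: "dl \<le> 2 * e * r" using d1 by simp
  have "2 * e * r < 1 * r" using ee(2) rpos by (intro mult_strict_right_mono) auto
  then have dlr: "dl < r" using d2 by simp
  have dl0: "dl \<ge> 0" unfolding dl_def using epos R1pos by simp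
  define P' where "P' = s ` Opt"
  have sep: "2 * r \<le> norm (a - b)" if "a \<in> Opt" "b \<in> Opt" "a \<noteq> b" for a b
    using packr_le[OF Ofin that] unfolding r_def by simp
  have sdist: "2 * r - 2 * dl \<le> norm (s a - s b)" if "a \<in> Opt" "b \<in> Opt" "a \<noteq> b" for a b
  proof -
    have eq: "a - b = (a - s a) + (s a - s b) + (s b - b)" by simp
    have "norm (a - b) \<le> norm ((a - s a) + (s a - s b)) + norm (s b - b)"
      unfolding eq by (rule norm_triangle_ineq)
    also have "\<dots> \<le> norm (a - s a) + norm (s a - s b) + norm (s b - b)"
      using norm_triangle_ineq[of "a - s a" "s a - s b"] by simp
    finally have t: "norm (a - b) \<le> norm (s a - a) + norm (s a - s b) + norm (s b - b)"
      by (simp add: norm_minus_commute)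
    have "a \<in> M" "b \<in> M" using that Opt(1) by auto
    then have "norm (s a - a) \<le> dl" "norm (s b - b) \<le> dl" using sclose by auto
    then show ?thesis using sep[OF that] t by linarith
  qed
  have inj: "inj_on s Opt"
  proof (rule inj_onI, rule ccontr)
    fix a b assume ab: "a \<in> Opt" "b \<in> Opt" "s a = s b" "a \<noteq> b"
    then have "2 * r - 2 * dl \<le> 0" using sdist[of a b] by simp
    then show False using dlr by simp
  qed
  have P'C: "P' \<subseteq> C" unfolding P'_def using s Opt(1) by auto
  have cP': "card P' = k" unfolding P'_def using card_image[OF inj] Opt(2) by simp
  have "GR M P \<le> GR M P'" using assms(12) P'C cP' by blast
  have P'fin: "finite P'" unfolding P'_def using Ofin by simp
  have P'ne: "P' \<noteq> {}" unfolding P'_def using pq0 by auto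
  have covP: "covR M P' \<le> R + dl"
  proof (rule covR_le[OF fin])
    show "M \<noteq> {}" using pq0 Opt(1) by auto
    fix x assume x: "x \<in> M"
    obtain o1 where o1: "o1 \<in> Opt" "delta x Opt = norm (x - o1)" using delta_attain[OF Ofin] pq0 by blast
    have "delta x P' \<le> norm (x - s o1)" using delta_le[OF P'fin] o1 unfolding P'_def by auto
    also have "\<dots> \<le> norm (x - o1) + norm (o1 - s o1)"
      using norm_triangle_ineq[of "x - o1" "o1 - s o1"] by simp
    also have "\<dots> \<le> R + dl"
    proof -
      have "o1 \<in> M" using o1 Opt(1) by auto
      then have "norm (o1 - s o1) \<le> dl" using sclose[of o1] by (simp add: norm_minus_commute)
      moreover have "norm (x - o1) \<le> R" using o1 covR_ge[OF fin x, of Opt] unfolding R_def by simp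
      ultimately show ?thesis by linarith
    qed
    finally show "delta x P' \<le> R + dl" .
  qed
  have pkP: "r - dl \<le> packr P'"
  proof (rule packr_ge[OF P'fin])
    show "s p0 \<in> P'" "s q0 \<in> P'" unfolding P'_def using pq0 by auto
    show "s p0 \<noteq> s q0" using inj pq0 by (meson inj_on_def)
    fix a b assume "a \<in> P'" "b \<in> P'" "a \<noteq> b"
    then obtain a' b' where "a' \<in> Opt" "b' \<in> Opt" "a = s a'" "b = s b'" "a' \<noteq> b'" unfolding P'_def by auto
    then show "r - dl \<le> norm (a - b) / 2" using sdist by fastforce
  qed
  have Rnn: "R \<ge> 0" using RR1 R1pos by simp
  have "GR M P' \<le> (R + dl) / (r - dl)"
    unfolding GR_def using covP pkP dlr Rnn dl0 by (intro frac_le) auto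
  also have "\<dots> \<le> ((1 + e) * R) / ((1 - 2*e) * r)"
    using d1 d2 ee(2) rpos dlr Rnn epos by (intro frac_le) (auto simp: algebra_simps)
  also have "\<dots> = (1 + \<epsilon>) * (R / r)" by (metis ee(1) times_divide_times_eq)
  also have "\<dots> = (1 + \<epsilon>) * GR_OPT M k" using Opt(3) unfolding GR_def R_def r_def by simp
  finally show ?thesis using \<open>GR M P \<le> GR M P'\<close> by simp
qed

end
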